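(* Let $\Xi\subseteq\mathbb{R}^n$ be as in the context, $\Delta_1=[0,1]$, and let $\tilde{A}^k\in\mathbb{R}^{1\times n}$ for $k\in K=\{1,\dots,\kappa\}$. Consider $\mathcal{S}^1=\{(x,y_1,w)\in\Xi\times\Delta_1\times\mathbb{R}^n : y_1x_i=w_i\ \forall i\in N\}$ and $\mathcal{D}=\{(x,y_1,w,z)\in\Xi\times\Delta_1\times\mathbb{R}^n\times\mathbb{R}^\kappa : \tilde{A}^kw=z_k\ \forall k\in K\}$. Then $\mathrm{conv}\big((\mathcal{S}^1\times\mathbb{R}^\kappa)\cap\mathcal{D}\big)=\big(\mathrm{conv}(\mathcal{S}^1)\times\mathbb{R}^\kappa\big)\cap\mathcal{D}$.
   Context: $N=\{1,\dots,n\}$. $\Xi=\{x\in\mathbb{R}^n : Ex\ge f,\ 0\le x\le u\}$ is a network polytope of a directed network whose arcs are indexed by $N$: the rows of $Ex\ge f$ are, for each node $v$, the flow-balance constraint $\sum_{a\text{ out of }v}x_a-\sum_{a\text{ into }v}x_a\ge f_v$ and its negation $-\sum_{a\text{ out of }v}x_a+\sum_{a\text{ into }v}x_a\ge -f_v$, and $u$ is the arc-capacity vector. *)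

theory Defs
  imports "HOL-Analysis.Analysis"
begin

text \<open>Xi = {x. E x \<ge> f, 0 \<le> x \<le> u}, the rows of E x \<ge> f being, for each node v,
the flow balance constraint and its negation.\<close>

definition network_polytope ::
  "('n::finite \<Rightarrow> 'v::finite) \<Rightarrow> ('n \<Rightarrow> 'v) \<Rightarrow> ('v \<Rightarrow> real) \<Rightarrow> real^'n \<Rightarrow> (real^'n) set"
where
  "network_polytope tail head f u =
    {x. (\<forall>v. (\<Sum>a\<in>{a. tail a = v}. x$a) - (\<Sum>a\<in>{a. head a = v}. x$a) \<ge> f v)
      \<and> (\<forall>v. - (\<Sum>a\<in>{a. tail a = v}. x$a) + (\<Sum>a\<in>{a. head a = v}. x$a) \<ge> - f v)
      \<and> (\<forall>a. 0 \<le> x$a \<and> x$a \<le> u$a)}"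

definition S1_set ::
  "(real^'n::finite) set \<Rightarrow> ((real^'n) \<times> real \<times> (real^'n)) set" where
  "S1_set Xi = {(x, y, w). x \<in> Xi \<and> y \<in> {0..1} \<and> (\<forall>i. y * x$i = w$i)}"

definition D_set ::
  "(real^'n::finite) set \<Rightarrow> ('k::finite \<Rightarrow> real^'n) \<Rightarrow>
     ((real^'n) \<times> real \<times> (real^'n) \<times> (real^'k)) set" where
  "D_set Xi A = {(x, y, w, z). x \<in> Xi \<and> y \<in> {0..1} \<and> (\<forall>k. A k \<bullet> w = z$k)}"

definition times_Rk ::
  "('a \<times> 'b \<times> 'c) set \<Rightarrow> ('a \<times> 'b \<times> 'c \<times> (real^'k::finite)) set" where
  "times_Rk T = {(x, y, w, z). (x, y, w) \<in> T}"

end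

theory Submission
  imports Defs
begin

lemma convex_network:
  fixes tail head :: "'n::finite \<Rightarrow> 'v::finite" and f :: "'v \<Rightarrow> real" and u :: "real^'n"
  shows "convex (network_polytope tail head f u)"
proof (rule convexI)
  fix x y :: "real^'n" and a b :: real
  assume x: "x \<in> network_polytope tail head f u" and y: "y \<in> network_polytope tail head f u"
    and a: "0 \<le> a" and b: "0 \<le> b" and ab: "a + b = 1"
  have sx: "(\<Sum>i\<in>S. (a *\<^sub>R x + b *\<^sub>R y)$i) = a * (\<Sum>i\<in>S. x$i) + b * (\<Sum>i\<in>S. y$i)" for S
    by (simp add: sum.distrib sum_distrib_left)
  show "a *\<^sub>R x + b *\<^sub>R y \<in> network_polytope tail head f u"
    unfolding network_polytope_def mem_Collect_eq sx
  proof (intro conjI allI)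
    fix v
    have fv: "a * f v + b * f v = f v" using ab by (metis distrib_right mult_1)
    have 1: "(\<Sum>a\<in>{a. tail a = v}. x$a) - (\<Sum>a\<in>{a. head a = v}. x$a) \<ge> f v"
      and 2: "(\<Sum>a\<in>{a. tail a = v}. y$a) - (\<Sum>a\<in>{a. head a = v}. y$a) \<ge> f v"
      and 3: "- (\<Sum>a\<in>{a. tail a = v}. x$a) + (\<Sum>a\<in>{a. head a = v}. x$a) \<ge> - f v"
      and 4: "- (\<Sum>a\<in>{a. tail a = v}. y$a) + (\<Sum>a\<in>{a. head a = v}. y$a) \<ge> - f v"
      using x y unfolding network_polytope_def by auto
    have "a * ((\<Sum>a\<in>{a. tail a = v}. x$a) - (\<Sum>a\<in>{a. head a = v}. x$a)) \<ge> a * f v"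
      using 1 a by (rule mult_left_mono)
    moreover have "b * ((\<Sum>a\<in>{a. tail a = v}. y$a) - (\<Sum>a\<in>{a. head a = v}. y$a)) \<ge> b * f v"
      using 2 b by (rule mult_left_mono)
    ultimately show "a * (\<Sum>i\<in>{a. tail a = v}. x $ i) + b * (\<Sum>i\<in>{a. tail a = v}. y $ i) -
         (a * (\<Sum>i\<in>{a. head a = v}. x $ i) + b * (\<Sum>i\<in>{a. head a = v}. y $ i)) \<ge> f v"
      using fv by (simp add: algebra_simps)
    have "a * (- (\<Sum>a\<in>{a. tail a = v}. x$a) + (\<Sum>a\<in>{a. head a = v}. x$a)) \<ge> a * - f v"
      using 3 a by (rule mult_left_mono)
    moreover have "b * (- (\<Sum>a\<in>{a. tail a = v}. y$a) + (\<Sum>a\<in>{a. head a = v}. y$a)) \<ge> b * - f v"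
      using 4 b by (rule mult_left_mono)
    ultimately show "- (a * (\<Sum>i\<in>{a. tail a = v}. x $ i) + b * (\<Sum>i\<in>{a. tail a = v}. y $ i)) +
         (a * (\<Sum>i\<in>{a. head a = v}. x $ i) + b * (\<Sum>i\<in>{a. head a = v}. y $ i)) \<ge> - f v"
      using fv by (simp add: algebra_simps)
  next
    fix i
    have "0 \<le> x$i" "x$i \<le> u$i" "0 \<le> y$i" "y$i \<le> u$i"
      using x y unfolding network_polytope_def by auto
    then have "a * x$i \<le> a * u$i" "b * y$i \<le> b * u$i"
      using a b by (auto intro: mult_left_mono)
    moreover have "a * u$i + b * u$i = u$i" using ab by (metis distrib_right mult_1)
    ultimately show "(a *\<^sub>R x + b *\<^sub>R y) $ i \<le> u $ i" by simp
    show "0 \<le> (a *\<^sub>R x + b *\<^sub>R y) $ i"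
      using \<open>0 \<le> x$i\<close> \<open>0 \<le> y$i\<close> a b by simp
  qed
qed

theorem proposition3:
  fixes tail head :: "'n::finite \<Rightarrow> 'v::finite"
    and f :: "'v \<Rightarrow> real" and u :: "real^'n"
    and A :: "'k::finite \<Rightarrow> real^'n"
  defines "Xi \<equiv> network_polytope tail head f u"
  shows "convex hull (times_Rk (S1_set Xi) \<inter> D_set Xi A)
           = times_Rk (convex hull (S1_set Xi)) \<inter> D_set Xi A"
proof
  have cX: "convex Xi" unfolding Xi_def by (rule convex_network)
  have c1: "convex (times_Rk (convex hull (S1_set Xi)) :: ((real^'n) \<times> real \<times> (real^'n) \<times> (real^'k)) set)"
  proof (rule convexI)
    fix p q :: "(real^'n) \<times> real \<times> (real^'n) \<times> (real^'k)" and a b :: real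
    assume "p \<in> times_Rk (convex hull (S1_set Xi))" "q \<in> times_Rk (convex hull (S1_set Xi))"
      "0 \<le> a" "0 \<le> b" "a + b = 1"
    then show "a *\<^sub>R p + b *\<^sub>R q \<in> times_Rk (convex hull (S1_set Xi))"
      unfolding times_Rk_def
      using convexD[OF convex_convex_hull, of "(fst p, fst (snd p), fst (snd (snd p)))" "S1_set Xi"
            "(fst q, fst (snd q), fst (snd (snd q)))" a b]
      by (cases p; cases q) auto
  qed
  have c2: "convex (D_set Xi A)"
  proof (rule convexI)
    fix p q :: "(real^'n) \<times> real \<times> (real^'n) \<times> (real^'k)" and a b :: real
    assume "p \<in> D_set Xi A" "q \<in> D_set Xi A" "0 \<le> a" "0 \<le> b" "a + b = 1"
    then show "a *\<^sub>R p + b *\<^sub>R q \<in> D_set Xi A"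
      unfolding D_set_def
      using convexD[OF cX, of "fst p" "fst q" a b]
        convexD[OF convex_real_interval(5), of "fst (snd p)" 0 1 "fst (snd q)" a b]
      by (cases p; cases q) (auto simp: inner_add_right)
  qed
  show "convex hull (times_Rk (S1_set Xi) \<inter> D_set Xi A)
           \<subseteq> times_Rk (convex hull (S1_set Xi)) \<inter> D_set Xi A"
    apply (rule hull_minimal)
    using hull_subset[of "S1_set Xi" convex] c1 c2
    by (auto simp: times_Rk_def intro!: convex_Int)
  show "times_Rk (convex hull (S1_set Xi)) \<inter> D_set Xi A
     \<subseteq> convex hull (times_Rk (S1_set Xi) \<inter> D_set Xi A)"
  proof
    fix p assume p: "p \<in> times_Rk (convex hull (S1_set Xi)) \<inter> D_set Xi A"
    obtain x y w z where pe: "p = (x, y, w, z)" by (cases p) auto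
    define g :: "(real^'n) \<times> real \<times> (real^'n) \<Rightarrow> (real^'n) \<times> real \<times> (real^'n) \<times> (real^'k)"
      where "g = (\<lambda>p. (fst p, fst (snd p), snd (snd p), \<chi> k. A k \<bullet> snd (snd p)))"
    have lg: "linear g"
      by (rule linearI) (auto simp: g_def vec_eq_iff inner_add_right)
    have "g ` S1_set Xi \<subseteq> times_Rk (S1_set Xi) \<inter> D_set Xi A"
      by (auto simp: g_def S1_set_def times_Rk_def D_set_def)
    then have "convex hull (g ` S1_set Xi) \<subseteq> convex hull (times_Rk (S1_set Xi) \<inter> D_set Xi A)"
      by (rule hull_mono)
    moreover have "(x, y, w) \<in> convex hull (S1_set Xi)" using p pe by (auto simp: times_Rk_def)
    then have "g (x, y, w) \<in> convex hull (g ` S1_set Xi)"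
      using convex_hull_linear_image[OF lg] by blast
    moreover have "g (x, y, w) = p" using p pe by (auto simp: g_def D_set_def vec_eq_iff)
    ultimately show "p \<in> convex hull (times_Rk (S1_set Xi) \<inter> D_set Xi A)" by auto
  qed
qed

end
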